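(* Let $n\ge 2$ and $H\le\operatorname{Sym}(n)$. The set $V_n(H)$ of homeomorphisms of $\mathfrak{C}_n$ described by tables (as in the context) is a group under composition.
   Context: Let $\mathcal{A}_n=\{0,1,\dots,n-1\}$, let $\mathcal{A}_n^*$ be the set of finite words over $\mathcal{A}_n$ (including the empty word), and let $\mathfrak{C}_n=\mathcal{A}_n^{\mathbb{N}}$ (infinite words, product topology). For $u\in\mathcal{A}_n^*$ and $v$ a finite or infinite word, $uv$ denotes concatenation, and $u\le_{pref} v$ means $v=uw$ for some word $w$. A (complete) prefix code of $\mathfrak{C}_n$ is a finite set $S\subset\mathcal{A}_n^*$ such that every $\zeta\in\mathfrak{C}_n$ has exactly one $s\in S$ with $s\le_{pref}\zeta$. A permutation $\sigma\in\operatorname{Sym}(n)$ acts on words letterwise: $\sigma(z_1z_2\cdots)=\sigma(z_1)\sigma(z_2)\cdots$. A table consists of two prefix codes $P=\{p_1,\dots,p_k\}$ and $Q=\{q_1,\dots,q_k\}$ of $\mathfrak{C}_n$ of the same size $k\ge1$ together with $\sigma_i,\tau_i\in H$ ($1\le i\le k$); it describes the homeomorphism of $\mathfrak{C}_n$ sending $p_i\,\sigma_i(u)\mapsto q_i\,\tau_i(u)$ for all $u\in\mathfrak{C}_n$ and all $i$. *)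

theory Defs
  imports "HOL-Algebra.Bij" "HOL-Algebra.Group"
begin

text \<open>Finite words over A_n = {0,...,n-1} are nat lists; infinite words are
  functions nat => nat.\<close>

definition words :: "nat \<Rightarrow> nat list set" where
  "words n = {w. set w \<subseteq> {..<n}}"

definition cantor :: "nat \<Rightarrow> (nat \<Rightarrow> nat) set" where
  "cantor n = {z. \<forall>i. z i < n}"

definition cat :: "nat list \<Rightarrow> (nat \<Rightarrow> nat) \<Rightarrow> (nat \<Rightarrow> nat)" where
  "cat u z = (\<lambda>i. if i < length u then u ! i else z (i - length u))"

definition is_prefix :: "nat list \<Rightarrow> (nat \<Rightarrow> nat) \<Rightarrow> bool" where
  "is_prefix u z \<longleftrightarrow> (\<forall>i<length u. z i = u ! i)"

definition prefix_code :: "nat \<Rightarrow> nat list set \<Rightarrow> bool" where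
  "prefix_code n S \<longleftrightarrow> finite S \<and> S \<subseteq> words n \<and>
     (\<forall>z\<in>cantor n. \<exists>!s. s \<in> S \<and> is_prefix s z)"

text \<open>The homeomorphism f (an element of the bijection group of C_n, hence
  extensional on C_n) is described by a table with entries in H:
  P = {p 0..p (k-1)}, Q = {q 0..q (k-1)} prefix codes of size k, and
  f (p_i sigma_i(u)) = q_i tau_i(u). Permutations act letterwise: sigma o u.\<close>
definition described_by_table :: "nat \<Rightarrow> (nat \<Rightarrow> nat) set \<Rightarrow> ((nat \<Rightarrow> nat) \<Rightarrow> (nat \<Rightarrow> nat)) \<Rightarrow> bool" where
  "described_by_table n H f \<longleftrightarrow>
     f \<in> extensional (cantor n) \<and>
     (\<exists>(k::nat) (p::nat \<Rightarrow> nat list) (q::nat \<Rightarrow> nat list)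
        (\<sigma>::nat \<Rightarrow> nat \<Rightarrow> nat) (\<tau>::nat \<Rightarrow> nat \<Rightarrow> nat).
        k \<ge> 1 \<and>
        inj_on p {..<k} \<and> inj_on q {..<k} \<and>
        prefix_code n (p ` {..<k}) \<and> prefix_code n (q ` {..<k}) \<and>
        (\<forall>i<k. \<sigma> i \<in> H \<and> \<tau> i \<in> H) \<and>
        (\<forall>i<k. \<forall>u\<in>cantor n. f (cat (p i) (\<sigma> i \<circ> u)) = cat (q i) (\<tau> i \<circ> u)))"

definition V :: "nat \<Rightarrow> (nat \<Rightarrow> nat) set \<Rightarrow> ((nat \<Rightarrow> nat) \<Rightarrow> (nat \<Rightarrow> nat)) set" where
  "V n H = {f. described_by_table n H f}"

end

theory Submission
  imports Defs
begin


lemma cat_Nil[simp]: "cat [] u = u" by (simp add: cat_def)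

lemma cat_append: "cat (a @ b) u = cat a (cat b u)"
  by (auto simp: cat_def nth_append fun_eq_iff)

lemma cat_cantor: "w \<in> words n \<Longrightarrow> u \<in> cantor n \<Longrightarrow> cat w u \<in> cantor n"
  by (auto simp: cat_def cantor_def words_def dest!: nth_mem)

lemma comp_cat: "h \<circ> cat x u = cat (map h x) (h \<circ> u)"
  by (auto simp: cat_def fun_eq_iff)

lemma shift_cantor: "z \<in> cantor n \<Longrightarrow> (\<lambda>j. z (j + m)) \<in> cantor n"
  by (auto simp: cantor_def)

lemma prefix_decomp: "is_prefix p z \<Longrightarrow> z = cat p (\<lambda>j. z (j + length p))"
  by (auto simp: is_prefix_def cat_def fun_eq_iff)

lemma is_prefix_cat[simp]: "is_prefix p (cat p u)"
  by (auto simp: is_prefix_def cat_def)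

lemma cat_inj: "cat p u = cat p u' \<Longrightarrow> u = u'"
proof
  fix j assume "cat p u = cat p u'"
  then have "cat p u (j + length p) = cat p u' (j + length p)" by simp
  then show "u j = u' j" by (simp add: cat_def)
qed

lemma cat_eq_len: "cat w u = cat w' u' \<Longrightarrow> length w = length w' \<Longrightarrow> w = w' \<and> u = u'"
proof -
  assume e: "cat w u = cat w' u'" and l: "length w = length w'"
  have "w = w'"
  proof (rule nth_equalityI)
    show "length w = length w'" by fact
    fix i assume "i < length w"
    with e l have "cat w u i = cat w' u' i" by simp
    with \<open>i < length w\<close> l show "w ! i = w' ! i" by (simp add: cat_def)
  qed
  with e cat_inj show ?thesis by blast
qed

lemma prefix_of_cat_short:
  assumes "is_prefix w (cat v u)" "length w \<le> length v"
  shows "v = w @ drop (length w) v"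
proof -
  have "take (length w) v = w"
    using assms by (intro nth_equalityI) (auto simp: is_prefix_def cat_def)
  then show ?thesis by (metis append_take_drop_id)
qed

lemma two_prefixes:
  assumes "is_prefix a z" "is_prefix b z" "length a \<le> length b"
  shows "b = a @ drop (length a) b"
proof -
  have "z = cat b (\<lambda>j. z (j + length b))" using assms(2) by (rule prefix_decomp)
  then show ?thesis using assms prefix_of_cat_short by metis
qed

lemma words_append[simp]: "a @ b \<in> words n \<longleftrightarrow> a \<in> words n \<and> b \<in> words n"
  by (auto simp: words_def)

lemma words_drop: "a \<in> words n \<Longrightarrow> drop m a \<in> words n"
  by (auto simp: words_def dest: in_set_dropD)
lemma words_take: "a \<in> words n \<Longrightarrow> take m a \<in> words n"
  by (auto simp: words_def dest: in_set_takeD)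

lemma Bij_maps: "h \<in> Bij {..<n} \<Longrightarrow> x < n \<Longrightarrow> h x < n"
  using Bij_imp_funcset by fastforce

lemma Bij_cantor: "h \<in> Bij {..<n} \<Longrightarrow> v \<in> cantor n \<Longrightarrow> h \<circ> v \<in> cantor n"
  by (auto simp: cantor_def Bij_maps)

lemma Bij_words: "h \<in> Bij {..<n} \<Longrightarrow> x \<in> words n \<Longrightarrow> map h x \<in> words n"
  by (auto simp: words_def Bij_maps)

lemma Bij_inv_cantor: "h \<in> Bij {..<n} \<Longrightarrow> v \<in> cantor n \<Longrightarrow> inv_into {..<n} h \<circ> v \<in> cantor n"
  by (auto simp: cantor_def Bij_inv_into_mem[where S="{..<n}", simplified])

lemma Bij_right: "h \<in> Bij {..<n} \<Longrightarrow> v \<in> cantor n \<Longrightarrow> h \<circ> (inv_into {..<n} h \<circ> v) = v"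
  by (auto simp: cantor_def Bij_def fun_eq_iff bij_betw_inv_into_right)

lemma Bij_left: "h \<in> Bij {..<n} \<Longrightarrow> v \<in> cantor n \<Longrightarrow> inv_into {..<n} h \<circ> (h \<circ> v) = v"
  by (auto simp: cantor_def Bij_def fun_eq_iff bij_betw_inv_into_left)

lemma Bij_cancel: "h \<in> Bij {..<n} \<Longrightarrow> v \<in> cantor n \<Longrightarrow> v' \<in> cantor n \<Longrightarrow> h \<circ> v = h \<circ> v' \<Longrightarrow> v = v'"
  by (metis Bij_left)

lemma compose_cantor: "u \<in> cantor n \<Longrightarrow> compose {..<n} g h \<circ> u = g \<circ> (h \<circ> u)"
  by (auto simp: cantor_def compose_def fun_eq_iff)

lemma one_cantor: "u \<in> cantor n \<Longrightarrow> (\<lambda>x\<in>{..<n}. x) \<circ> u = u"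
  by (auto simp: cantor_def fun_eq_iff)



lemma table_E:
  assumes "described_by_table n H f"
  obtains k p q \<sigma> \<tau> where "(k::nat) \<ge> 1" "inj_on p {..<k}" "inj_on q {..<k}"
        "prefix_code n (p ` {..<k})" "prefix_code n (q ` {..<k})"
        "\<forall>i<k. \<sigma> i \<in> H \<and> \<tau> i \<in> H"
        "\<forall>i<k. \<forall>u\<in>cantor n. f (cat (p i) (\<sigma> i \<circ> u)) = cat (q i) (\<tau> i \<circ> u)"
  using assms unfolding described_by_table_def by auto

lemma pc_decomp:
  assumes pc: "prefix_code n (p ` {..<k})" and z: "z \<in> cantor n"
    and sH: "\<forall>i<k. \<sigma> i \<in> Bij {..<n}"
  shows "\<exists>i<k. \<exists>u\<in>cantor n. z = cat (p i) (\<sigma> i \<circ> u)"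
proof -
  obtain s where s: "s \<in> p ` {..<k}" "is_prefix s z" using pc z unfolding prefix_code_def by blast
  then obtain i where i: "i < k" "s = p i" by auto
  let ?t = "\<lambda>j. z (j + length (p i))"
  have t: "?t \<in> cantor n" using z by (rule shift_cantor)
  have "z = cat (p i) ?t" using prefix_decomp[of "p i" z] s i by simp
  also have "\<dots> = cat (p i) (\<sigma> i \<circ> (inv_into {..<n} (\<sigma> i) \<circ> ?t))"
    using Bij_right[OF _ t] sH i by simp
  finally have e: "z = cat (p i) (\<sigma> i \<circ> (inv_into {..<n} (\<sigma> i) \<circ> ?t))" .
  have "inv_into {..<n} (\<sigma> i) \<circ> ?t \<in> cantor n" using Bij_inv_cantor[OF _ t] sH i by blast
  with e i show ?thesis by blast
qed

lemma pc_unique: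
  assumes pc: "prefix_code n (p ` {..<k})" and z: "z \<in> cantor n"
    and inj: "inj_on p {..<k}" and "i < k" "j < k" "is_prefix (p i) z" "is_prefix (p j) z"
  shows "i = j"
proof -
  have "p i = p j" using pc z assms unfolding prefix_code_def by blast
  then show ?thesis using inj assms by (auto dest: inj_onD)
qed

lemma pc_words: "prefix_code n (p ` {..<k}) \<Longrightarrow> i < k \<Longrightarrow> p i \<in> words n"
  unfolding prefix_code_def by blast

lemma row_cantor: "prefix_code n (p ` {..<k}) \<Longrightarrow> i < k \<Longrightarrow> s \<in> Bij {..<n} \<Longrightarrow> u \<in> cantor n
   \<Longrightarrow> cat (p i) (s \<circ> u) \<in> cantor n"
  by (intro cat_cantor Bij_cantor pc_words) auto

lemma table_Bij:
  assumes HB: "H \<subseteq> Bij {..<n}" and T: "described_by_table n H f"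
  shows "f \<in> Bij (cantor n)"
proof -
  have ext: "f \<in> extensional (cantor n)" using T[unfolded described_by_table_def, THEN conjunct1] .
  from T obtain k p q \<sigma> \<tau> where k: "(k::nat) \<ge> 1" and
    ip: "inj_on p {..<k}" and iq: "inj_on q {..<k}" and
    pp: "prefix_code n (p ` {..<k})" and pq: "prefix_code n (q ` {..<k})" and
    H: "\<forall>i<k. \<sigma> i \<in> H \<and> \<tau> i \<in> H" and
    eq: "\<forall>i<k. \<forall>u\<in>cantor n. f (cat (p i) (\<sigma> i \<circ> u)) = cat (q i) (\<tau> i \<circ> u)"
    by (rule table_E)
  have sB: "\<forall>i<k. \<sigma> i \<in> Bij {..<n}" and tB: "\<forall>i<k. \<tau> i \<in> Bij {..<n}" using H HB by auto
  have img: "f ` cantor n = cantor n"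
  proof
    show "f ` cantor n \<subseteq> cantor n"
    proof
      fix y assume "y \<in> f ` cantor n"
      then obtain z where z: "z \<in> cantor n" "y = f z" by auto
      obtain i u where iu: "i < k" "u \<in> cantor n" "z = cat (p i) (\<sigma> i \<circ> u)"
        using pc_decomp[OF pp z(1) sB] by blast
      have "y = cat (q i) (\<tau> i \<circ> u)" using eq iu z by simp
      then show "y \<in> cantor n" using row_cantor[OF pq iu(1) _ iu(2)] tB iu(1) by simp
    qed
    show "cantor n \<subseteq> f ` cantor n"
    proof
      fix y assume y: "y \<in> cantor n"
      obtain i u where iu: "i < k" "u \<in> cantor n" "y = cat (q i) (\<tau> i \<circ> u)"
        using pc_decomp[OF pq y tB] by blast
      have "cat (p i) (\<sigma> i \<circ> u) \<in> cantor n" using row_cantor[OF pp iu(1) _ iu(2)] sB iu(1) by simp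
      moreover have "y = f (cat (p i) (\<sigma> i \<circ> u))" using eq iu by simp
      ultimately show "y \<in> f ` cantor n" by blast
    qed
  qed
  have "inj_on f (cantor n)"
  proof (rule inj_onI)
    fix z z' assume z: "z \<in> cantor n" and z': "z' \<in> cantor n" and e: "f z = f z'"
    obtain i u where iu: "i < k" "u \<in> cantor n" "z = cat (p i) (\<sigma> i \<circ> u)"
      using pc_decomp[OF pp z sB] by blast
    obtain j u' where ju: "j < k" "u' \<in> cantor n" "z' = cat (p j) (\<sigma> j \<circ> u')"
      using pc_decomp[OF pp z' sB] by blast
    have fz: "f z = cat (q i) (\<tau> i \<circ> u)" using eq iu by simp
    have fz': "f z = cat (q j) (\<tau> j \<circ> u')" using eq ju e by simp
    have "f z \<in> cantor n" using img z by blast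
    then have "i = j" using pc_unique[OF pq _ iq iu(1) ju(1)] fz fz' is_prefix_cat by metis
    then have "\<tau> i \<circ> u = \<tau> i \<circ> u'" using cat_inj[of "q i" "\<tau> i \<circ> u" "\<tau> i \<circ> u'"] fz fz' by simp
    then have "u = u'" using Bij_cancel[of "\<tau> i" n u u'] tB iu ju by simp
    then show "z = z'" using iu ju \<open>i = j\<close> by simp
  qed
  then show ?thesis using ext img by (simp add: Bij_def bij_betw_def)
qed

lemma table_inv:
  assumes HB: "H \<subseteq> Bij {..<n}" and T: "described_by_table n H f"
  shows "described_by_table n H (\<lambda>x\<in>cantor n. inv_into (cantor n) f x)"
proof -
  have fB: "f \<in> Bij (cantor n)" using table_Bij[OF HB T] .
  from T obtain k p q \<sigma> \<tau> where 
    k: "(k::nat) \<ge> 1" and ip: "inj_on p {..<k}" and iq: "inj_on q {..<k}" and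
    pp: "prefix_code n (p ` {..<k})" and pq: "prefix_code n (q ` {..<k})" and
    H: "\<forall>i<k. \<sigma> i \<in> H \<and> \<tau> i \<in> H" and
    eq: "\<forall>i<k. \<forall>u\<in>cantor n. f (cat (p i) (\<sigma> i \<circ> u)) = cat (q i) (\<tau> i \<circ> u)"
    by (rule table_E)
  have sB: "\<forall>i<k. \<sigma> i \<in> Bij {..<n}" and tB: "\<forall>i<k. \<tau> i \<in> Bij {..<n}" using H HB by auto
  have "\<forall>i<k. \<forall>u\<in>cantor n. (\<lambda>x\<in>cantor n. inv_into (cantor n) f x) (cat (q i) (\<tau> i \<circ> u)) = cat (p i) (\<sigma> i \<circ> u)"
  proof (intro allI impI ballI)
    fix i u assume i: "i < k" and u: "u \<in> cantor n"
    have c1: "cat (p i) (\<sigma> i \<circ> u) \<in> cantor n" using row_cantor[OF pp i _ u] sB i by simp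
    have c2: "cat (q i) (\<tau> i \<circ> u) \<in> cantor n" using row_cantor[OF pq i _ u] tB i by simp
    have "inv_into (cantor n) f (f (cat (p i) (\<sigma> i \<circ> u))) = cat (p i) (\<sigma> i \<circ> u)"
      using fB c1 by (simp add: Bij_def bij_betw_def inv_into_f_f)
    then show "(\<lambda>x\<in>cantor n. inv_into (cantor n) f x) (cat (q i) (\<tau> i \<circ> u)) = cat (p i) (\<sigma> i \<circ> u)"
      using c2 eq i u by simp
  qed
  note eqi = this
  show ?thesis unfolding described_by_table_def
    apply (rule conjI)
     apply simp
    apply (rule exI[of _ k], rule exI[of _ q], rule exI[of _ p], rule exI[of _ \<tau>], rule exI[of _ \<sigma>])
    using k ip iq pp pq H eqi by (intro conjI; fast)
qed



definition Wd :: "nat \<Rightarrow> nat \<Rightarrow> nat list set" where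
  "Wd n L = {w. w \<in> words n \<and> length w = L}"

definition loc :: "nat \<Rightarrow> (nat \<Rightarrow> nat) set \<Rightarrow> ((nat \<Rightarrow> nat) \<Rightarrow> (nat \<Rightarrow> nat)) \<Rightarrow> nat \<Rightarrow> bool" where
  "loc n H f L \<longleftrightarrow> (\<forall>w\<in>Wd n L. \<exists>qw hw. qw \<in> words n \<and> hw \<in> H \<and>
      (\<forall>u\<in>cantor n. f (cat w u) = cat qw (hw \<circ> u)))"

lemma BijGroup_mult: "a \<in> Bij S \<Longrightarrow> b \<in> Bij S \<Longrightarrow> a \<otimes>\<^bsub>BijGroup S\<^esub> b = compose S a b"
  by (simp add: BijGroup_def)

lemma BijGroup_one: "\<one>\<^bsub>BijGroup S\<^esub> = (\<lambda>x\<in>S. x)"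
  by (simp add: BijGroup_def)

lemma sub_Bij: "subgroup H (BijGroup {..<n}) \<Longrightarrow> H \<subseteq> Bij {..<n}"
  using subgroup.subset by (fastforce simp: BijGroup_def)

lemma zero_cantor: "0 < n \<Longrightarrow> (\<lambda>_. 0) \<in> cantor n"
  by (simp add: cantor_def)

lemma table_loc:
  assumes n: "0 < n" and sg: "subgroup H (BijGroup {..<n})" and T: "described_by_table n H f"
  shows "\<exists>L. loc n H f L"
proof -
  have HB: "H \<subseteq> Bij {..<n}" using sg by (rule sub_Bij)
  from T obtain k p q \<sigma> \<tau> where k: "(k::nat) \<ge> 1" and
    ip: "inj_on p {..<k}" and iq: "inj_on q {..<k}" and
    pp: "prefix_code n (p ` {..<k})" and pq: "prefix_code n (q ` {..<k})" and
    H: "\<forall>i<k. \<sigma> i \<in> H \<and> \<tau> i \<in> H" and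
    eq: "\<forall>i<k. \<forall>u\<in>cantor n. f (cat (p i) (\<sigma> i \<circ> u)) = cat (q i) (\<tau> i \<circ> u)"
    by (rule table_E)
  define L where "L = Max (length ` p ` {..<k})"
  have Lge: "length (p i) \<le> L" if "i < k" for i
    unfolding L_def using that by (intro Max_ge) auto
  have "loc n H f L" unfolding loc_def
  proof
    fix w assume w: "w \<in> Wd n L"
    have z0: "cat w (\<lambda>_. 0) \<in> cantor n" using w n by (intro cat_cantor zero_cantor) (auto simp: Wd_def)
    then obtain s where "s \<in> p ` {..<k}" "is_prefix s (cat w (\<lambda>_. 0))"
      using pp unfolding prefix_code_def by blast
    then obtain i where i: "i < k" and pre: "is_prefix (p i) (cat w (\<lambda>_. 0))" by auto
    define x where "x = drop (length (p i)) w"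
    have wx: "w = p i @ x" unfolding x_def
      using prefix_of_cat_short[OF pre] Lge[OF i] w by (auto simp: Wd_def)
    have xw: "x \<in> words n" using w unfolding x_def Wd_def by (auto intro: words_drop)
    let ?s = "\<sigma> i" and ?t = "\<tau> i"
    have sB: "?s \<in> Bij {..<n}" and tB: "?t \<in> Bij {..<n}" using H HB i by auto
    define hw where "hw = ?t \<otimes>\<^bsub>BijGroup {..<n}\<^esub> inv\<^bsub>BijGroup {..<n}\<^esub> ?s"
    have hwH: "hw \<in> H" unfolding hw_def using H i sg
      by (intro subgroup.m_closed[OF sg] subgroup.m_inv_closed[OF sg]) auto
    have hwB: "hw \<in> Bij {..<n}" using hwH HB by auto
    have hw_app: "hw \<circ> v = ?t \<circ> (inv_into {..<n} ?s \<circ> v)" if v: "v \<in> cantor n" for v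
    proof -
      have "hw = compose {..<n} ?t (\<lambda>x\<in>{..<n}. inv_into {..<n} ?s x)"
        unfolding hw_def using sB tB restrict_inv_into_Bij[OF sB]
        by (simp add: inv_BijGroup BijGroup_mult)
      then show ?thesis using v by (auto simp: compose_def cantor_def fun_eq_iff)
    qed
    show "\<exists>qw hw. qw \<in> words n \<and> hw \<in> H \<and> (\<forall>u\<in>cantor n. f (cat w u) = cat qw (hw \<circ> u))"
    proof (intro exI conjI ballI)
      show "q i @ map hw x \<in> words n" using pc_words[OF pq i] Bij_words[OF hwB xw] by simp
      show "hw \<in> H" by fact
      fix u assume u: "u \<in> cantor n"
      define v where "v = cat x u"
      have v: "v \<in> cantor n" unfolding v_def using xw u by (rule cat_cantor)
      have iv: "inv_into {..<n} ?s \<circ> v \<in> cantor n" using Bij_inv_cantor[OF sB v] .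
      have "f (cat w u) = f (cat (p i) v)" by (simp add: wx v_def cat_append)
      also have "\<dots> = f (cat (p i) (?s \<circ> (inv_into {..<n} ?s \<circ> v)))" using Bij_right[OF sB v] by simp
      also have "\<dots> = cat (q i) (?t \<circ> (inv_into {..<n} ?s \<circ> v))" using eq i iv by blast
      also have "\<dots> = cat (q i) (hw \<circ> v)" using hw_app[OF v] by simp
      also have "\<dots> = cat (q i @ map hw x) (hw \<circ> u)" by (simp add: v_def comp_cat cat_append)
      finally show "f (cat w u) = cat (q i @ map hw x) (hw \<circ> u)" .
    qed
  qed
  then show ?thesis by blast
qed

lemma loc_comp:
  assumes sg: "subgroup H (BijGroup {..<n})" and lf: "loc n H f L" and lg: "loc n H g M"
  shows "loc n H (compose (cantor n) g f) (L + M)"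
  unfolding loc_def
proof
  have HB: "H \<subseteq> Bij {..<n}" using sg by (rule sub_Bij)
  fix w assume w: "w \<in> Wd n (L + M)"
  define w1 where "w1 = take L w"
  define x where "x = drop L w"
  have w1: "w1 \<in> Wd n L" using w unfolding w1_def Wd_def by (auto intro: words_take)
  have xw: "x \<in> words n" "length x = M" using w unfolding x_def Wd_def by (auto intro: words_drop)
  obtain qw hw where qw: "qw \<in> words n" and hwH: "hw \<in> H" and
    feq: "\<forall>u\<in>cantor n. f (cat w1 u) = cat qw (hw \<circ> u)"
    using lf w1 unfolding loc_def by blast
  have hwB: "hw \<in> Bij {..<n}" using hwH HB by auto
  define y where "y = qw @ map hw x"
  define v where "v = take M y"
  define r where "r = drop M y"
  have yw: "y \<in> words n" unfolding y_def using qw Bij_words[OF hwB xw(1)] by simp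
  have v: "v \<in> Wd n M" unfolding v_def Wd_def using yw xw(2) by (auto simp: y_def intro: words_take)
  have rw: "r \<in> words n" unfolding r_def using yw by (rule words_drop)
  obtain qv hv where qv: "qv \<in> words n" and hvH: "hv \<in> H" and
    geq: "\<forall>u\<in>cantor n. g (cat v u) = cat qv (hv \<circ> u)"
    using lg v unfolding loc_def by blast
  have hvB: "hv \<in> Bij {..<n}" using hvH HB by auto
  show "\<exists>qw hw. qw \<in> words n \<and> hw \<in> H \<and> (\<forall>u\<in>cantor n. compose (cantor n) g f (cat w u) = cat qw (hw \<circ> u))"
  proof (intro exI conjI ballI)
    show "qv @ map hv r \<in> words n" using qv Bij_words[OF hvB rw] by simp
    show "hv \<otimes>\<^bsub>BijGroup {..<n}\<^esub> hw \<in> H" using hvH hwH by (rule subgroup.m_closed[OF sg])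
    fix u assume u: "u \<in> cantor n"
    have wc: "cat w u \<in> cantor n" using w u by (intro cat_cantor) (auto simp: Wd_def)
    have hu: "hw \<circ> u \<in> cantor n" using Bij_cantor[OF hwB u] .
    have ru: "cat r (hw \<circ> u) \<in> cantor n" using rw hu by (rule cat_cantor)
    have "compose (cantor n) g f (cat w u) = g (f (cat w u))" using wc by (simp add: compose_def)
    also have "f (cat w u) = f (cat w1 (cat x u))"
      by (simp add: w1_def x_def flip: cat_append)
    also have "\<dots> = cat qw (hw \<circ> cat x u)" using feq cat_cantor[OF xw(1) u] by blast
    also have "\<dots> = cat y (hw \<circ> u)" by (simp add: y_def comp_cat cat_append)
    also have "\<dots> = cat v (cat r (hw \<circ> u))" by (simp add: v_def r_def flip: cat_append)
    also have "g \<dots> = cat qv (hv \<circ> cat r (hw \<circ> u))" using geq ru by blast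
    also have "\<dots> = cat (qv @ map hv r) (hv \<circ> (hw \<circ> u))" by (simp add: comp_cat cat_append)
    also have "hv \<circ> (hw \<circ> u) = (hv \<otimes>\<^bsub>BijGroup {..<n}\<^esub> hw) \<circ> u"
      using hvB hwB u by (simp add: BijGroup_mult compose_cantor)
    finally show "compose (cantor n) g f (cat w u) = cat (qv @ map hv r) ((hv \<otimes>\<^bsub>BijGroup {..<n}\<^esub> hw) \<circ> u)" .
  qed
qed



lemma Wd_finite: "finite (Wd n L)"
proof -
  have "Wd n L = {xs. set xs \<subseteq> {..<n} \<and> length xs = L}" by (auto simp: Wd_def words_def)
  then show ?thesis by (simp add: finite_lists_length_eq)
qed

lemma Wd_take: "z \<in> cantor n \<Longrightarrow> map z [0..<L] \<in> Wd n L"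
  by (auto simp: Wd_def words_def cantor_def)

lemma Wd_prefix: "is_prefix (map z [0..<L]) z"
  by (simp add: is_prefix_def)

lemma Wd_prefix_unique: "w \<in> Wd n L \<Longrightarrow> w' \<in> Wd n L \<Longrightarrow> is_prefix w z \<Longrightarrow> is_prefix w' z \<Longrightarrow> w = w'"
  by (intro nth_equalityI) (auto simp: Wd_def is_prefix_def)

lemma loc_table:
  assumes n: "0 < n" and sg: "subgroup H (BijGroup {..<n})" and fB: "f \<in> Bij (cantor n)"
    and lf: "loc n H f L"
  shows "described_by_table n H f"
proof -
  have HB: "H \<subseteq> Bij {..<n}" using sg by (rule sub_Bij)
  let ?W = "Wd n L"
  obtain q h where qh: "\<forall>w\<in>?W. q w \<in> words n \<and> h w \<in> H \<and> (\<forall>u\<in>cantor n. f (cat w u) = cat (q w) (h w \<circ> u))"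
    using lf unfolding loc_def by metis
  have finj: "inj_on f (cantor n)" and fimg: "f ` cantor n = cantor n" and fext: "f \<in> extensional (cantor n)"
    using fB by (auto simp: Bij_def bij_betw_def)
  have key: "w = w'" if w: "w \<in> ?W" and w': "w' \<in> ?W" and e: "q w' = q w @ x" for w w' x
  proof -
    have hB: "h w \<in> Bij {..<n}" "h w' \<in> Bij {..<n}" using qh w w' HB by auto
    have xw: "x \<in> words n" using qh w' e by (metis words_append)
    define u' :: "nat \<Rightarrow> nat" where "u' = (\<lambda>_. 0)"
    have u': "u' \<in> cantor n" unfolding u'_def using n by (rule zero_cantor)
    define c where "c = cat x (h w' \<circ> u')"
    have c: "c \<in> cantor n" unfolding c_def using xw Bij_cantor[OF hB(2) u'] by (rule cat_cantor)
    define v where "v = inv_into {..<n} (h w) \<circ> c"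
    have v: "v \<in> cantor n" unfolding v_def using Bij_inv_cantor[OF hB(1) c] .
    have "f (cat w v) = cat (q w) (h w \<circ> v)" using qh w v by blast
    also have "\<dots> = cat (q w) c" unfolding v_def using Bij_right[OF hB(1) c] by simp
    also have "\<dots> = cat (q w') (h w' \<circ> u')" by (simp add: c_def e cat_append)
    also have "\<dots> = f (cat w' u')" using qh w' u' by simp
    finally have "cat w v = cat w' u'"
      using finj cat_cantor[OF _ v, of w] cat_cantor[OF _ u', of w'] w w'
      by (auto simp: Wd_def dest: inj_onD)
    then show ?thesis using cat_eq_len w w' by (auto simp: Wd_def)
  qed
  have qinj: "inj_on q ?W" by (rule inj_onI) (rule key[where x="[]"], auto)
  have Wfin: "finite ?W" by (rule Wd_finite)
  have Wne: "replicate L 0 \<in> ?W" using n by (auto simp: Wd_def words_def)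
  define k where "k = card ?W"
  have k: "k \<ge> 1" unfolding k_def using Wfin Wne by (metis Suc_leI card_gt_0_iff empty_iff One_nat_def)
  obtain e where e: "bij_betw e {0..<k} ?W" unfolding k_def using ex_bij_betw_nat_finite[OF Wfin] by blast
  have e': "bij_betw e {..<k} ?W" using e by (simp add: atLeast0LessThan)
  have eimg: "e ` {..<k} = ?W" and einj: "inj_on e {..<k}" using e' by (auto simp: bij_betw_def)
  have pcP: "prefix_code n (e ` {..<k})" unfolding eimg prefix_code_def
  proof (intro conjI ballI)
    show "finite ?W" by fact
    show "?W \<subseteq> words n" by (auto simp: Wd_def)
    fix z assume z: "z \<in> cantor n"
    show "\<exists>!s. s \<in> ?W \<and> is_prefix s z"
      using Wd_take[OF z] Wd_prefix[of z L] Wd_prefix_unique by blast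
  qed
  have qimg: "(q \<circ> e) ` {..<k} = q ` ?W" using eimg by (metis image_comp)
  have pcQ: "prefix_code n ((q \<circ> e) ` {..<k})" unfolding qimg prefix_code_def
  proof (intro conjI ballI)
    show "finite (q ` ?W)" using Wfin by simp
    show "q ` ?W \<subseteq> words n" using qh by auto
    fix z assume z: "z \<in> cantor n"
    obtain y where y: "y \<in> cantor n" "z = f y" using z fimg by blast
    define w where "w = map y [0..<L]"
    have w: "w \<in> ?W" unfolding w_def using y(1) by (rule Wd_take)
    have lw: "length w = L" by (simp add: w_def)
    have ydec: "y = cat w (\<lambda>j. y (j + L))" using prefix_decomp[OF Wd_prefix[of y L]] by (simp add: w_def)
    have "z = cat (q w) (h w \<circ> (\<lambda>j. y (j + L)))"
      using y ydec qh w shift_cantor[OF y(1)] by metis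
    then have pz: "is_prefix (q w) z" by simp
    show "\<exists>!s. s \<in> q ` ?W \<and> is_prefix s z"
    proof (rule ex1I[of _ "q w"])
      show "q w \<in> q ` ?W \<and> is_prefix (q w) z" using w pz by blast
      fix s assume "s \<in> q ` ?W \<and> is_prefix s z"
      then obtain w' where w': "w' \<in> ?W" "s = q w'" "is_prefix (q w') z" by blast
      show "s = q w"
      proof (cases "length (q w) \<le> length (q w')")
        case True
        then have "q w' = q w @ drop (length (q w)) (q w')" using two_prefixes pz w'(3) by blast
        then show ?thesis using key[OF w w'(1)] w'(2) by metis
      next
        case False
        then have "q w = q w' @ drop (length (q w')) (q w)" using two_prefixes pz w'(3) by simp
        then show ?thesis using key[OF w'(1) w] w'(2) by metis
      qed
    qed
  qed
  have qeinj: "inj_on (q \<circ> e) {..<k}" using comp_inj_on[OF einj] qinj eimg by simp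
  have oneH: "(\<lambda>x\<in>{..<n}. x) \<in> H" using subgroup.one_closed[OF sg] by (simp add: BijGroup_one)
  have Hs: "\<forall>i<k. (\<lambda>_. (\<lambda>x\<in>{..<n}. x)) i \<in> H \<and> (h \<circ> e) i \<in> H"
    using oneH qh eimg by auto
  have eqs: "\<forall>i<k. \<forall>u\<in>cantor n. f (cat (e i) ((\<lambda>_. (\<lambda>x\<in>{..<n}. x)) i \<circ> u)) = cat ((q \<circ> e) i) ((h \<circ> e) i \<circ> u)"
  proof (intro allI impI ballI)
    fix i u assume i: "i < k" and u: "u \<in> cantor n"
    have "e i \<in> ?W" using i eimg by blast
    then show "f (cat (e i) ((\<lambda>_. (\<lambda>x\<in>{..<n}. x)) i \<circ> u)) = cat ((q \<circ> e) i) ((h \<circ> e) i \<circ> u)"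
      using qh u one_cantor[OF u] by simp
  qed
  show ?thesis unfolding described_by_table_def
    apply (rule conjI)
     apply (rule fext)
    apply (rule exI[of _ k], rule exI[of _ e], rule exI[of _ "q \<circ> e"], rule exI[of _ "\<lambda>_. (\<lambda>x\<in>{..<n}. x)"], rule exI[of _ "h \<circ> e"])
    using k einj qeinj pcP pcQ Hs eqs by (intro conjI; fast)
qed



theorem mainTheorem4:
  fixes n :: nat and H :: "(nat \<Rightarrow> nat) set"
  assumes "n \<ge> 2"
    and "subgroup H (BijGroup {..<n})"
  shows "subgroup (V n H) (BijGroup (cantor n))"
proof -
  have n: "0 < n" using assms(1) by simp
  note sg = assms(2)
  have HB: "H \<subseteq> Bij {..<n}" using sg by (rule sub_Bij)
  show ?thesis
  proof (rule subgroup.intro)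
    show "V n H \<subseteq> carrier (BijGroup (cantor n))"
      using table_Bij[OF HB] by (auto simp: V_def BijGroup_def)
  next
    fix x y assume x: "x \<in> V n H" and y: "y \<in> V n H"
    have tx: "described_by_table n H x" and ty: "described_by_table n H y" using x y by (auto simp: V_def)
    have xB: "x \<in> Bij (cantor n)" and yB: "y \<in> Bij (cantor n)" using table_Bij[OF HB] tx ty by auto
    obtain L where L: "loc n H x L" using table_loc[OF n sg tx] by blast
    obtain M where M: "loc n H y M" using table_loc[OF n sg ty] by blast
    have "loc n H (compose (cantor n) x y) (M + L)" using loc_comp[OF sg M L] .
    then have "described_by_table n H (compose (cantor n) x y)"
      using loc_table[OF n sg compose_Bij[OF xB yB]] by blast
    then show "x \<otimes>\<^bsub>BijGroup (cantor n)\<^esub> y \<in> V n H"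
      using xB yB by (simp add: BijGroup_mult V_def)
  next
    have "loc n H (\<lambda>x\<in>cantor n. x) 0" unfolding loc_def
    proof
      fix w assume "w \<in> Wd n 0"
      then have w: "w = []" by (simp add: Wd_def)
      have oneH: "(\<lambda>x\<in>{..<n}. x) \<in> H" using subgroup.one_closed[OF sg] by (simp add: BijGroup_one)
      show "\<exists>qw hw. qw \<in> words n \<and> hw \<in> H \<and> (\<forall>u\<in>cantor n. (\<lambda>x\<in>cantor n. x) (cat w u) = cat qw (hw \<circ> u))"
        using oneH one_cantor w by (intro exI[of _ "[]"] exI[of _ "\<lambda>x\<in>{..<n}. x"]) (auto simp: words_def)
    qed
    then have "described_by_table n H (\<lambda>x\<in>cantor n. x)"
      using loc_table[OF n sg id_Bij] by blast
    then show "\<one>\<^bsub>BijGroup (cantor n)\<^esub> \<in> V n H" by (simp add: BijGroup_one V_def)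
  next
    fix x assume x: "x \<in> V n H"
    have tx: "described_by_table n H x" using x by (auto simp: V_def)
    have xB: "x \<in> Bij (cantor n)" using table_Bij[OF HB tx] .
    show "inv\<^bsub>BijGroup (cantor n)\<^esub> x \<in> V n H"
      using table_inv[OF HB tx] xB by (simp add: inv_BijGroup V_def)
  qed
qed


end
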